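(* For a positive integer $m$ let $M=\lfloor\frac{m-1}{2}\rfloor$ and define $$\widetilde{f_{m,1}}(z)=(-1)^M\int_0^z\frac{y^{2M+2}}{1+y^2}\,dy\qquad\big(z\in\mathbb{C}\setminus([i,i\infty)\cup[-i,-i\infty))\big),$$ the integral taken along the line segment from $0$ to $z$. As $m\to\infty$ the following estimates hold, uniformly in $z$ and $t$: (i) $\widetilde{f_{m,1}}(z)=O(2^{-m})$ for $|z|\le\frac12$; (ii) $\widetilde{f_{m,1}}(it)=O\big(e^{-\frac12\sqrt m}\frac{1}{\sqrt m}\big)$ for $-1+\frac1{\sqrt m}\le t\le1-\frac1{\sqrt m}$; (iii) for $1-\frac1{\sqrt m}\le t\le 1-\frac1m$, $$\widetilde{f_{m,1}}(it)=\frac{1}{2i}\int_{m(1-t)}^\infty\frac{e^{-\zeta}}{\zeta}\,d\zeta+O\!\left(\frac{\ln m}{m}\right)=O(1),$$ and also $\widetilde{f_{m,1}}(-it)=O(1)$. *)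

theory Defs
  imports "HOL-Complex_Analysis.Complex_Analysis"
begin

definition f_tilde :: "nat \<Rightarrow> complex \<Rightarrow> complex" where
  "f_tilde m z = (-1) ^ ((m - 1) div 2) *
     contour_integral (linepath 0 z) (\<lambda>y. y ^ (2 * ((m - 1) div 2) + 2) / (1 + y\<^sup>2))"

definition E1 :: "real \<Rightarrow> real" where
  "E1 x = integral {x..} (\<lambda>s. exp (- s) / s)"

end

theory Submission
  imports Defs
begin


lemma E1_integrable:
  assumes "c > 0"
  shows "(\<lambda>s::real. exp (- s) / s) integrable_on {c..}"
proof (rule measurable_bounded_by_integrable_imp_integrable_real)
  show "(\<lambda>s::real. exp (- s) / s) \<in> borel_measurable (lebesgue_on {c..})"
    using assms by (intro continuous_imp_measurable_on_sets_lebesgue continuous_intros) auto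
  show "(\<lambda>s. exp (-1 * s) / c) integrable_on {c..}"
    using integrable_on_exp_minus_to_infinity[of 1 c] by (intro integrable_on_divide) auto
  show "\<bar>exp (- x) / x\<bar> \<le> exp (-1 * x) / c" if "x \<in> {c..}" for x
    using that assms by (auto simp: frac_le)
qed auto

lemma E1_bounds:
  assumes "c \<ge> 1"
  shows "0 \<le> E1 c" "E1 c \<le> exp (- c)"
proof -
  have int: "(\<lambda>s::real. exp (- s) / s) integrable_on {c..}" using assms by (intro E1_integrable) auto
  show "0 \<le> E1 c" unfolding E1_def
    using assms by (intro integral_nonneg int) auto
  have "E1 c \<le> integral {c..} (\<lambda>s. exp (-1 * s))" unfolding E1_def
    using assms by (intro integral_le int integrable_on_exp_minus_to_infinity) (auto simp: divide_le_eq)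
  also have "\<dots> = exp (- c)"
    using has_integral_exp_minus_to_infinity[of 1 c] by (simp add: integral_unique)
  finally show "E1 c \<le> exp (- c)" .
qed

lemma E1_split:
  assumes "0 < a" "a \<le> b"
  shows "E1 a = integral {a..b} (\<lambda>s. exp (- s) / s) + E1 b"
proof -
  have int: "(\<lambda>s::real. exp (- s) / s) integrable_on {a..}" using assms by (intro E1_integrable) auto
  have i1: "(\<lambda>s::real. exp (- s) / s) integrable_on {a..b}"
    by (rule integrable_on_subinterval[OF int]) auto
  have i2: "(\<lambda>s::real. exp (- s) / s) integrable_on {b..}"
    using assms by (intro E1_integrable) auto
  have eq: "{a..} = {a..b} \<union> {b..}" using assms by auto
  have neg: "negligible ({a..b} \<inter> {b..})"
  proof -
    have "{a..b} \<inter> {b..} = {b}" using assms by auto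
    then show ?thesis by simp
  qed
  show ?thesis unfolding E1_def eq
    by (subst integral_Un[OF i1 i2 neg]) simp
qed



definition nn :: "nat \<Rightarrow> nat" where "nn m = 2 * ((m - 1) div 2) + 2"
definition phi :: "nat \<Rightarrow> real \<Rightarrow> real" where "phi m x = x ^ nn m / (1 - x\<^sup>2)"
definition psi :: "nat \<Rightarrow> real \<Rightarrow> real" where "psi m u = phi m (1 - u / real m) / real m"

lemma ipow_nn: "(\<i> * of_real x) ^ nn m = (-1) ^ ((m - 1) div 2 + 1) * of_real (x ^ nn m)"
proof -
  define k where "k = (m - 1) div 2"
  have e: "nn m = 2 * (k + 1)" unfolding nn_def k_def by simp
  have "(\<i> * of_real x) ^ nn m = ((\<i> * of_real x)\<^sup>2) ^ (k + 1)"
    unfolding e power_mult by simp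
  also have "(\<i> * of_real x)\<^sup>2 = (-1) * of_real (x\<^sup>2)"
    by (simp add: power_mult_distrib)
  also have "((-1) * of_real (x\<^sup>2)) ^ (k + 1) = (-1) ^ (k + 1) * (of_real (x ^ nn m) :: complex)"
    unfolding power_mult_distrib e power_mult by simp
  finally show ?thesis unfolding k_def .
qed

lemma sq_lt1: "0 \<le> (x::real) \<Longrightarrow> x < 1 \<Longrightarrow> x * x < 1"
  using mult_left_le[of x x] by linarith

lemma deriv_g: "m \<ge> (1::nat) \<Longrightarrow> ((\<lambda>u. 1 - u / real m) has_field_derivative -1 / real m) (at x within S)"
  apply (rule derivative_eq_intros refl)+
  apply simp
  apply (rule refl)
  apply simp
  done

lemma f_tilde_it:
  assumes t: "0 < t" "t < 1"
  shows "f_tilde m (\<i> * of_real t) = - \<i> * of_real (integral {0..t} (phi m))"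
proof -
  define M where "M = (m - 1) div 2"
  define h where "h = (\<lambda>y::complex. y ^ (2 * M + 2) / (1 + y\<^sup>2))"
  define J where "J = integral {0..t} (phi m)"
  have cont: "continuous_on {0..t} (phi m)"
    unfolding phi_def using t
    by (intro continuous_intros) (auto simp: power2_eq_square dest!: sq_lt1)
  have "(phi m has_integral J) {0..t}" unfolding J_def
    using cont by (intro integrable_integral integrable_continuous_interval)
  then have "((\<lambda>x. complex_of_real (phi m x)) has_integral of_real J) {0..t}"
    by (rule has_integral_of_real)
  then have HI: "((\<lambda>x. (-1) ^ (M + 1) * complex_of_real (phi m x)) has_integral ((-1) ^ (M + 1) * of_real J)) {0..t}"
    by (rule has_integral_mult_right)
  have PW: "h (Complex 0 x) = (-1) ^ (M + 1) * complex_of_real (phi m x)" if "x \<in> {0..t}" for x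
  proof -
    have c: "Complex 0 x = \<i> * of_real x" by (simp add: complex_eq_iff)
    have "1 - x\<^sup>2 \<noteq> 0" using that t
      by (auto simp: power2_eq_square dest!: sq_lt1)
    moreover have "1 + (\<i> * of_real x)\<^sup>2 = of_real (1 - x\<^sup>2)"
      by (simp add: power2_eq_square complex_eq_iff)
    ultimately show ?thesis unfolding h_def c phi_def
      using ipow_nn[of x m] by (simp add: nn_def M_def of_real_divide)
  qed
  have "((\<lambda>x. h (Complex 0 x)) has_integral ((-1) ^ (M + 1) * of_real J)) {0..t}"
    by (rule has_integral_eq[OF _ HI]) (simp add: PW)
  then have "((\<lambda>x. h (Complex 0 x)) has_integral (- \<i> * (\<i> * (-1) ^ (M + 1) * of_real J))) {0..t}"
    by (simp add: mult.assoc)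
  then have "(h has_contour_integral (\<i> * (-1) ^ (M + 1) * of_real J)) (linepath 0 (\<i> * of_real t))"
    by (subst has_contour_integral_linepath_same_Re_iff[where c=0 and a=0 and b=t]) (use t in auto)
  then have "contour_integral (linepath 0 (\<i> * of_real t)) h = \<i> * (-1) ^ (M + 1) * of_real J"
    by (rule contour_integral_unique)
  then show ?thesis
    unfolding f_tilde_def J_def[symmetric] h_def[symmetric] M_def[symmetric]
    by (simp add: power_add)
qed

lemma phi_subst:
  assumes t: "0 < t" "t < 1" and m: "m \<ge> 1"
  shows "integral {0..t} (phi m) = integral {real m * (1 - t)..real m} (psi m)"
proof -
  have cont: "continuous_on {0..t} (phi m)"
    unfolding phi_def using t
    by (intro continuous_intros) (auto simp: power2_eq_square dest!: sq_lt1)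
  have le: "real m * (1 - t) \<le> real m" using t m by auto
  have sub: "(\<lambda>u. 1 - u / real m) ` {real m * (1 - t)..real m} \<subseteq> {0..t}"
    using m t by (auto simp: field_simps)
  have "((\<lambda>u. (- 1 / real m) *\<^sub>R phi m (1 - u / real m)) has_integral
      (integral {(1 - real m * (1 - t) / real m)..(1 - real m / real m)} (phi m) -
       integral {(1 - real m / real m)..(1 - real m * (1 - t) / real m)} (phi m))) {real m * (1 - t)..real m}"
  proof (rule has_integral_substitution_general[of "{}", OF _ le sub cont, where g' = "\<lambda>_. -1 / real m"])
    show "continuous_on {real m * (1 - t)..real m} (\<lambda>u. 1 - u / real m)"
      using m by (intro continuous_intros) auto
    fix x assume "x \<in> {real m * (1 - t)..real m} - {}"
    show "((\<lambda>u. 1 - u / real m) has_field_derivative -1 / real m) (at x within {real m * (1 - t)..real m})"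
      using m by (rule deriv_g)
  qed simp
  moreover have "1 - real m * (1 - t) / real m = t" "1 - real m / real m = 0" using m by auto
  ultimately have "((\<lambda>u. (- 1 / real m) *\<^sub>R phi m (1 - u / real m)) has_integral
      (- integral {0..t} (phi m))) {real m * (1 - t)..real m}" using t by simp
  note X = this
  have "((\<lambda>u. - ((- 1 / real m) *\<^sub>R phi m (1 - u / real m))) has_integral
      (integral {0..t} (phi m))) {real m * (1 - t)..real m}" 
    using has_integral_neg[OF X] by simp
  then have "(psi m has_integral (integral {0..t} (phi m))) {real m * (1 - t)..real m}"
    by (rule has_integral_eq[rotated]) (simp add: psi_def)
  then show ?thesis by (rule integral_unique[symmetric])
qed



lemma norm_one_plus_sq: "1 - (cmod y)\<^sup>2 \<le> cmod (1 + y\<^sup>2)"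
proof -
  have "norm (1::complex) - norm (- (y\<^sup>2)) \<le> norm (1 - - (y\<^sup>2))" by (rule norm_triangle_ineq2)
  then show ?thesis by (simp add: norm_power)
qed

lemma f_tilde_neg: "f_tilde m (- z) = - f_tilde m z"
  unfolding f_tilde_def contour_integral_integral
  by (simp add: linepath_def power_mult_distrib)

lemma f_tilde_bound:
  assumes "cmod z \<le> r" "r < 1" "0 \<le> r"
  shows "cmod (f_tilde m z) \<le> r ^ nn m / (1 - r\<^sup>2) * r"
proof -
  define h where "h = (\<lambda>y::complex. y ^ nn m / (1 + y\<^sup>2))"
  have r2: "r\<^sup>2 < 1" using assms by (simp add: power2_eq_square) (use sq_lt1 in blast)
  have seg: "cmod y \<le> r" if "y \<in> closed_segment 0 z" for y
    using segment_bound[OF that] assms by simp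
  have den: "1 - r\<^sup>2 \<le> cmod (1 + y\<^sup>2)" if "cmod y \<le> r" for y
  proof -
    have "(cmod y)\<^sup>2 \<le> r\<^sup>2" using that by (intro power_mono) auto
    then show ?thesis using norm_one_plus_sq[of y] by linarith
  qed
  have nz: "1 + y\<^sup>2 \<noteq> 0" if "cmod y \<le> r" for y
    using den[OF that] r2 by auto
  have "h contour_integrable_on linepath 0 z"
    unfolding h_def using nz seg
    by (intro contour_integrable_continuous_linepath continuous_intros) auto
  moreover have "cmod (h y) \<le> r ^ nn m / (1 - r\<^sup>2)" if "y \<in> closed_segment 0 z" for y
  proof -
    have "cmod (h y) = cmod y ^ nn m / cmod (1 + y\<^sup>2)" unfolding h_def by (simp add: norm_divide norm_power)
    also have "\<dots> \<le> r ^ nn m / (1 - r\<^sup>2)"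
      using seg[OF that] den[OF seg[OF that]] r2 assms(3)
      by (intro frac_le power_mono) auto
    finally show ?thesis .
  qed
  ultimately have "cmod (contour_integral (linepath 0 z) h) \<le> r ^ nn m / (1 - r\<^sup>2) * cmod (z - 0)"
    using r2 assms by (intro contour_integral_bound_linepath) auto
  also have "\<dots> \<le> r ^ nn m / (1 - r\<^sup>2) * r"
    using r2 assms by (intro mult_left_mono) auto
  finally show ?thesis
    unfolding f_tilde_def h_def nn_def by (simp add: norm_mult norm_power)
qed

lemma nn_ge: "m \<le> nn m" unfolding nn_def by auto
lemma nn_le: "m \<ge> 1 \<Longrightarrow> nn m \<le> m + 1" unfolding nn_def by presburger

lemma u_exp_le: "0 \<le> (u::real) \<Longrightarrow> u * exp (- u) \<le> 1"
proof -
  assume "0 \<le> u"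
  have "u \<le> exp u" using exp_ge_add_one_self[of u] by linarith
  then show ?thesis by (simp add: exp_minus field_simps)
qed

lemma u2_exp_le: "0 \<le> (u::real) \<Longrightarrow> u\<^sup>2 * exp (- u) \<le> 4"
proof -
  assume u: "0 \<le> u"
  have "u / 2 \<le> exp (u / 2)" using exp_ge_add_one_self[of "u/2"] by linarith
  then have "(u / 2)\<^sup>2 \<le> (exp (u / 2))\<^sup>2" using u by (intro power_mono) auto
  also have "(exp (u / 2))\<^sup>2 = exp u" by (simp add: power2_eq_square flip: exp_add)
  finally have "u\<^sup>2 \<le> 4 * exp u" by (simp add: power_divide)
  then show ?thesis by (simp add: exp_minus field_simps)
qed

lemma pow_diff_le:
  fixes a b :: real
  assumes "0 \<le> b" "b \<le> a"
  shows "a ^ Suc k - b ^ Suc k \<le> real (Suc k) * (a - b) * a ^ k"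
proof (induction k)
  case 0 then show ?case by simp
next
  case (Suc k)
  have "a ^ Suc (Suc k) - b ^ Suc (Suc k) = a * (a ^ Suc k - b ^ Suc k) + b ^ Suc k * (a - b)"
    by (simp add: algebra_simps)
  also have "\<dots> \<le> a * (real (Suc k) * (a - b) * a ^ k) + a ^ Suc k * (a - b)"
    using assms Suc by (intro add_mono mult_left_mono mult_right_mono power_mono) auto
  also have "\<dots> = real (Suc (Suc k)) * (a - b) * a ^ Suc k" by (simp add: algebra_simps)
  finally show ?case .
qed



lemma lin_aux:
  fixes A Y E r :: real
  assumes "0 \<le> A" "A \<le> r / 2" "Y \<le> E" "E - Y \<le> 13 * r" "0 < r"
  shows "\<bar>A - (E - Y) / 2\<bar> \<le> 7 * r"
proof -
  have "A - (E - Y) / 2 \<le> 7 * r" using assms by argo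
  moreover have "(E - Y) / 2 - A \<le> 7 * r" using assms by argo
  ultimately show ?thesis by (simp add: abs_le_iff)
qed

lemma psi_bound:
  assumes m: "m \<ge> 1" and u: "0 < u" "u \<le> real m"
  shows "\<bar>psi m u - exp (- u) / (2 * u)\<bar> \<le> 7 / (real m * u)"
proof -
  define w where "w = u / real m"
  define s where "s = 1 - w"
  define n where "n = nn m"
  define E where "E = exp (- u)"
  have mpos: "real m > 0" using m by simp
  have w: "0 < w" "w \<le> 1" unfolding w_def using u mpos by auto
  have s: "0 \<le> s" "s \<le> 1" unfolding s_def using w by auto
  have uw: "u = real m * w" unfolding w_def using mpos by simp
  have den: "1 - s\<^sup>2 = w * (2 - w)" unfolding s_def by (simp add: power2_eq_square algebra_simps)
  have psi_eq: "psi m u = s ^ n / (u * (2 - w))"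
    unfolding psi_def phi_def s_def[symmetric] w_def[symmetric] n_def[symmetric] den
    using mpos w by (simp add: uw field_simps)
  have E0: "0 \<le> E" unfolding E_def by simp
  have uE: "u * E \<le> 1" unfolding E_def using u by (intro u_exp_le) auto
  have u2E: "u\<^sup>2 * E \<le> 4" unfolding E_def using u by (intro u2_exp_le) auto
  have h1: "s \<le> exp (- w)" unfolding s_def using exp_ge_add_one_self[of "-w"] by linarith
  have expw: "exp (- w) ^ m = E" unfolding E_def uw
    by (simp add: exp_of_nat_mult[symmetric])
  have h2: "s ^ m \<le> E" using power_mono[OF h1 s(1), of m] expw by simp
  have h3: "s ^ n \<le> s ^ m" unfolding n_def using s by (intro power_decreasing nn_ge) auto
  have h4: "s ^ (m + 1) \<le> s ^ n" unfolding n_def using s m by (intro power_decreasing nn_le) auto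
  have h5: "s ^ m - s ^ (m + 1) = w * s ^ m" unfolding s_def by (simp add: algebra_simps)
  have h5': "s ^ m - s ^ n \<le> w * E"
    using h4 h5 mult_left_mono[OF h2, of w] w by linarith
  obtain k where k: "m = Suc k" using m by (cases m) auto
  have ew: "exp (- w) \<le> 1 / (1 + w)"
  proof -
    have "1 + w \<le> exp w" by (rule exp_ge_add_one_self)
    then show ?thesis using w by (simp add: exp_minus field_simps)
  qed
  have ew2: "exp (- w) - s \<le> w\<^sup>2"
  proof -
    have "1 / (1 + w) - s = w\<^sup>2 / (1 + w)" unfolding s_def using w
      by (simp add: field_simps power2_eq_square)
    also have "\<dots> \<le> w\<^sup>2" using w by (simp add: divide_le_eq field_simps)
    finally show ?thesis using ew by linarith
  qed
  have ek: "exp (- w) ^ k \<le> 3 * E"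
  proof -
    have "exp (- w) ^ k = exp (real k * (- w))" by (simp add: exp_of_nat_mult[symmetric])
    also have "real k * (- w) = - u + w" using uw k by (simp add: algebra_simps)
    also have "exp (- u + w) = E * exp w" unfolding E_def by (simp add: exp_add[symmetric])
    also have "\<dots> \<le> E * 3"
      using E0 w exp_le by (intro mult_left_mono) (auto intro: order_trans[of _ "exp 1"])
    finally show ?thesis by simp
  qed
  have h6: "E - s ^ m \<le> 12 / real m"
  proof -
    have "E - s ^ m = exp (- w) ^ Suc k - s ^ Suc k" using expw k by simp
    also have "\<dots> \<le> real (Suc k) * (exp (- w) - s) * exp (- w) ^ k"
      by (rule pow_diff_le[OF s(1) h1])
    also have "\<dots> \<le> real m * w\<^sup>2 * (3 * E)"
      using k ew2 ek h1 by (intro mult_mono) auto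
    also have "\<dots> = 3 * (u\<^sup>2 * E) / real m" using mpos unfolding uw
      by (simp add: field_simps power2_eq_square)
    also have "\<dots> \<le> 3 * 4 / real m" using u2E mpos by (intro divide_right_mono) (auto simp: mult.commute)
    finally show ?thesis by simp
  qed
  have wE: "w * E \<le> 1 / real m" unfolding w_def using uE mpos by (simp add: field_simps)
  have A0: "0 \<le> s ^ n / (2 - w) - s ^ n / 2"
    using w s by (simp add: field_simps)
  have A1: "s ^ n / (2 - w) - s ^ n / 2 \<le> 1 / (2 * real m)"
  proof -
    have "s ^ n / (2 - w) - s ^ n / 2 = s ^ n * w / (2 * (2 - w))" using w
      by (simp add: field_simps)
    also have "\<dots> \<le> s ^ n * w / 2" using w s
      by (intro divide_left_mono mult_nonneg_nonneg) auto
    also have "\<dots> \<le> E * w / 2" using h2 h3 w by (intro divide_right_mono mult_right_mono) auto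
    also have "\<dots> \<le> 1 / (2 * real m)" using wE by (simp add: mult.commute)
    finally show ?thesis .
  qed
  have B0: "s ^ n \<le> E" using h2 h3 by linarith
  have B1: "E - s ^ n \<le> 13 / real m" using h5' h6 wE by (simp add: add_divide_distrib[symmetric])
  have main: "\<bar>s ^ n / (2 - w) - E / 2\<bar> \<le> 7 / real m"
  proof -
    define r where "r = 1 / real m"
    have r1: "1 / (2 * real m) = r / 2" "13 / real m = 13 * r" "7 / real m = 7 * r"
      unfolding r_def by auto
    have eq: "s ^ n / (2 - w) - E / 2 = (s ^ n / (2 - w) - s ^ n / 2) - (E - s ^ n) / 2" by (simp add: field_simps)
    have r0: "0 < r" unfolding r_def using mpos by simp
    show ?thesis unfolding eq using A0 A1 B0 B1 r0 unfolding r1 by (intro lin_aux)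
  qed
  have "psi m u - exp (- u) / (2 * u) = (s ^ n / (2 - w) - E / 2) / u"
    unfolding psi_eq E_def using u w by (simp add: field_simps)
  then have "\<bar>psi m u - exp (- u) / (2 * u)\<bar> = \<bar>s ^ n / (2 - w) - E / 2\<bar> / u" using u by simp
  also have "\<dots> \<le> (7 / real m) / u" using main u by (intro divide_right_mono) auto
  finally show ?thesis by simp
qed



lemma psi_cont:
  assumes m: "m \<ge> 1" and a: "0 < a"
  shows "continuous_on {a..real m} (psi m)"
proof -
  have nz: "1 - (1 - x / real m)\<^sup>2 \<noteq> 0" if "x \<in> {a..real m}" for x
  proof -
    have "0 \<le> 1 - x / real m" "1 - x / real m < 1" using that m a by auto
    then have "(1 - x / real m) * (1 - x / real m) < 1" by (rule sq_lt1)
    then show ?thesis by (simp add: power2_eq_square)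
  qed
  show ?thesis unfolding psi_def phi_def
    using nz m by (intro continuous_intros) auto
qed

lemma int_inv:
  fixes a b :: real
  assumes "0 < a" "a \<le> b"
  shows "((\<lambda>u. 1 / u) has_integral (ln b - ln a)) {a..b}"
proof (rule fundamental_theorem_of_calculus[where f = "ln :: real \<Rightarrow> real" and f' = "\<lambda>u. 1 / u"])
  show "a \<le> b" by (rule assms(2))
  fix x assume "x \<in> {a..b}"
  then have "x > 0" using assms by auto
  then show "(ln has_vector_derivative 1 / x) (at x within {a..b})"
    by (auto intro!: derivative_eq_intros simp flip: has_real_derivative_iff_has_vector_derivative)
qed

lemma int_bound:
  assumes m: "m \<ge> 1" and a: "1 \<le> a" "a \<le> real m"
  shows "\<bar>integral {a..real m} (psi m) - integral {a..real m} (\<lambda>s. exp (- s) / s) / 2\<bar>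
           \<le> 7 * ln (real m) / real m"
proof -
  have mpos: "real m > 0" using m by simp
  have HP: "(psi m has_integral integral {a..real m} (psi m)) {a..real m}"
    using psi_cont[OF m] a by (intro integrable_integral integrable_continuous_interval) auto
  have HE: "((\<lambda>s. exp (- s) / s) has_integral integral {a..real m} (\<lambda>s. exp (- s) / s)) {a..real m}"
    using a by (intro integrable_integral integrable_continuous_interval continuous_intros) auto
  have HD: "((\<lambda>u. psi m u - exp (- u) / u / 2) has_integral
      (integral {a..real m} (psi m) - integral {a..real m} (\<lambda>s. exp (- s) / s) / 2)) {a..real m}"
    by (intro has_integral_diff HP has_integral_divide HE)
  have HB: "((\<lambda>u. 7 / real m * (1 / u)) has_integral (7 / real m * (ln (real m) - ln a))) {a..real m}"
    using a by (intro has_integral_mult_right int_inv) auto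
  have "norm (integral {a..real m} (\<lambda>u. psi m u - exp (- u) / u / 2))
      \<le> integral {a..real m} (\<lambda>u. 7 / real m * (1 / u))"
  proof (rule integral_norm_bound_integral)
    show "(\<lambda>u. psi m u - exp (- u) / u / 2) integrable_on {a..real m}" using HD by blast
    show "(\<lambda>u. 7 / real m * (1 / u)) integrable_on {a..real m}" using HB by blast
    fix x assume x: "x \<in> {a..real m}"
    have "exp (- x) / x / 2 = exp (- x) / (2 * x)" by simp
    then show "norm (psi m x - exp (- x) / x / 2) \<le> 7 / real m * (1 / x)"
      using psi_bound[OF m, of x] x a by simp
  qed
  then have "\<bar>integral {a..real m} (psi m) - integral {a..real m} (\<lambda>s. exp (- s) / s) / 2\<bar>
      \<le> 7 / real m * (ln (real m) - ln a)"
    using integral_unique[OF HD] integral_unique[OF HB] by simp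
  also have "\<dots> \<le> 7 / real m * ln (real m)"
    using a mpos by (intro mult_left_mono) auto
  finally show ?thesis by simp
qed



lemma part_i:
  assumes m: "m \<ge> 1" and z: "cmod z \<le> 1/2"
  shows "cmod (f_tilde m z) \<le> 1 * 2 powr (- real m)"
proof -
  have "cmod (f_tilde m z) \<le> (1/2) ^ nn m / (1 - (1/2)\<^sup>2) * (1/2)"
    using z by (intro f_tilde_bound) auto
  also have "\<dots> = (2/3) * (1/2::real) ^ nn m" by (simp add: power2_eq_square)
  also have "\<dots> \<le> 1 * (1/2::real) ^ m"
    using nn_ge[of m] by (intro mult_mono power_decreasing) auto
  also have "(1/2::real) ^ m = 2 powr (- real m)"
    by (simp add: powr_minus powr_realpow power_one_over inverse_eq_divide)
  finally show ?thesis by simp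
qed

lemma part_ii:
  assumes m: "m \<ge> 4" and t: "-1 + 1 / sqrt (real m) \<le> t" "t \<le> 1 - 1 / sqrt (real m)"
  shows "cmod (f_tilde m (\<i> * of_real t)) \<le> 16 * (exp (- sqrt (real m) / 2) / sqrt (real m))"
proof -
  define q where "q = sqrt (real m)"
  define r where "r = 1 - 1 / q"
  have q2: "q\<^sup>2 = real m" unfolding q_def by simp
  have q: "2 \<le> q" unfolding q_def using m real_sqrt_le_mono[of 4 "real m"] by simp
  have r: "1/2 \<le> r" "r < 1" unfolding r_def using q by (auto simp: field_simps)
  have tr: "cmod (\<i> * of_real t) \<le> r" using t unfolding r_def q_def by (simp add: norm_mult abs_le_iff) 
  have "cmod (f_tilde m (\<i> * of_real t)) \<le> r ^ nn m / (1 - r\<^sup>2) * r"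
    using tr r by (intro f_tilde_bound) auto
  also have "\<dots> = r ^ Suc (nn m) / ((1 - r) * (1 + r))"
    by (simp add: power2_eq_square algebra_simps)
  also have "\<dots> \<le> r ^ m / ((1 - r) * 1)"
    using r nn_ge[of m] by (intro frac_le power_decreasing mult_pos_pos mult_left_mono) auto
  also have "\<dots> = q * r ^ m" unfolding r_def using q by (simp add: field_simps)
  also have "\<dots> \<le> q * exp (- q)"
  proof -
    have "r \<le> exp (- (1 / q))" unfolding r_def using exp_ge_add_one_self[of "- (1/q)"] by simp
    then have "r ^ m \<le> exp (- (1 / q)) ^ m" using r by (intro power_mono) auto
    also have "\<dots> = exp (real m * (- (1 / q)))" by (rule exp_of_nat_mult[symmetric])
    also have "real m * (- (1 / q)) = - q" using q q2 by (simp add: power2_eq_square field_simps)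
    finally show ?thesis using q by (intro mult_left_mono) auto
  qed
  also have "\<dots> \<le> 16 * (exp (- q / 2) / q)"
  proof -
    have "q / 4 \<le> exp (q / 4)" using exp_ge_add_one_self[of "q/4"] by linarith
    then have "(q / 4)\<^sup>2 \<le> (exp (q / 4))\<^sup>2" using q by (intro power_mono) auto
    also have "(exp (q / 4))\<^sup>2 = exp (q / 2)" by (simp add: power2_eq_square flip: exp_add)
    finally have "q * q \<le> 16 * exp (q / 2)" by (simp add: power2_eq_square field_simps)
    then have "q * q * exp (- q) \<le> 16 * exp (q / 2) * exp (- q)" by (intro mult_right_mono) auto
    also have "\<dots> = 16 * (exp (q / 2) * exp (- q))" by simp
    also have "exp (q / 2) * exp (- q) = exp (- q / 2)" by (simp flip: exp_add)
    finally have "q * q * exp (- q) \<le> 16 * exp (- q / 2)" by simp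
    then show ?thesis using q by (simp add: field_simps)
  qed
  finally show ?thesis unfolding q_def .
qed

lemma part_iii:
  assumes m: "m \<ge> 3" and t: "1 - 1 / sqrt (real m) \<le> t" "t \<le> 1 - 1 / real m"
  shows "cmod (f_tilde m (\<i> * of_real t) - of_real (E1 (real m * (1 - t))) / (2 * \<i>))
           \<le> 8 * (ln (real m) / real m)"
    and "cmod (f_tilde m (\<i> * of_real t)) \<le> 9"
proof -
  define a where "a = real m * (1 - t)"
  define G where "G = integral {0..t} (phi m)"
  define I where "I = integral {a..real m} (\<lambda>s. exp (- s) / s)"
  have mpos: "real m \<ge> 3" using m by simp
  have sq: "1 < sqrt (real m)" using mpos by simp
  have t0: "0 < t" using t sq by (smt (verit) divide_less_eq_1_pos)
  have t1: "t < 1" using t mpos by (smt (verit) divide_pos_pos)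
  have a1: "1 \<le> a" unfolding a_def using t(2) mpos by (simp add: field_simps)
  have am: "a \<le> real m" unfolding a_def using t0 mpos by (simp add: field_simps)
  have ln1: "1 \<le> ln (real m)"
    using mpos exp_le by (subst ln_ge_iff) auto
  have fG: "f_tilde m (\<i> * of_real t) = - \<i> * of_real G" unfolding G_def by (rule f_tilde_it[OF t0 t1])
  have Gpsi: "G = integral {a..real m} (psi m)" unfolding G_def a_def
    using m by (intro phi_subst t0 t1) auto
  have split: "E1 a = I + E1 (real m)" unfolding I_def using a1 am by (intro E1_split) auto
  have Em: "0 \<le> E1 (real m)" "E1 (real m) \<le> 1 / real m"
  proof -
    show "0 \<le> E1 (real m)" using mpos by (intro E1_bounds) auto
    have "E1 (real m) \<le> exp (- real m)" using mpos by (intro E1_bounds) auto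
    also have "\<dots> \<le> 1 / real m"
    proof -
      have "real m \<le> exp (real m)" using exp_ge_add_one_self[of "real m"] by linarith
      then show ?thesis using mpos by (simp add: exp_minus field_simps)
    qed
    finally show "E1 (real m) \<le> 1 / real m" .
  qed
  have ea: "exp (- a) \<le> 1" using a1 by simp
  have Ea: "0 \<le> E1 a" "E1 a \<le> 1" using E1_bounds[OF a1] ea by linarith+
  have core: "\<bar>G - I / 2\<bar> \<le> 7 * ln (real m) / real m"
    unfolding Gpsi I_def using int_bound[of m a] m a1 am by auto
  have diff: "\<bar>G - E1 a / 2\<bar> \<le> 8 * (ln (real m) / real m)"
  proof -
    have "G - E1 a / 2 = (G - I / 2) - E1 (real m) / 2" using split by (simp add: field_simps)
    then have "\<bar>G - E1 a / 2\<bar> \<le> \<bar>G - I / 2\<bar> + \<bar>E1 (real m) / 2\<bar>" by (simp add: abs_triangle_ineq4)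
    then have "\<bar>G - E1 a / 2\<bar> \<le> \<bar>G - I / 2\<bar> + E1 (real m) / 2" using Em by simp
    also have "\<dots> \<le> 7 * ln (real m) / real m + ln (real m) / real m"
    proof -
      have "1 / real m \<le> ln (real m) / real m" using ln1 mpos by (intro divide_right_mono) auto
      then have "E1 (real m) / 2 \<le> ln (real m) / real m" using Em by linarith
      then show ?thesis using core by linarith
    qed
    finally show ?thesis by simp
  qed
  have eq: "f_tilde m (\<i> * of_real t) - of_real (E1 a) / (2 * \<i>) = - \<i> * of_real (G - E1 a / 2)"
    unfolding fG by (simp add: field_simps)
  show "cmod (f_tilde m (\<i> * of_real t) - of_real (E1 (real m * (1 - t))) / (2 * \<i>))
           \<le> 8 * (ln (real m) / real m)"
  proof -
    have "cmod (- \<i> * complex_of_real (G - E1 a / 2)) = \<bar>G - E1 a / 2\<bar>"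
      by (simp only: norm_mult norm_minus_cancel norm_ii norm_of_real) simp
    then show ?thesis unfolding a_def[symmetric] eq using diff by simp
  qed
  have lnm: "ln (real m) / real m \<le> 1" using mpos ln_le_minus_one[of "real m"] by simp
  have "cmod (f_tilde m (\<i> * of_real t)) = \<bar>G\<bar>" unfolding fG by (simp add: norm_mult)
  also have "\<dots> \<le> \<bar>G - E1 a / 2\<bar> + E1 a / 2" using abs_triangle_ineq[of "G - E1 a / 2" "E1 a / 2"] Ea by simp
  also have "\<dots> \<le> 8 + 1" using diff lnm Ea by linarith
  finally show "cmod (f_tilde m (\<i> * of_real t)) \<le> 9" by simp
qed


theorem lemma2:
  shows
  "(\<exists>C N. \<forall>m\<ge>N. \<forall>z. cmod z \<le> 1/2 \<longrightarrow>
        cmod (f_tilde m z) \<le> C * 2 powr (- real m))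
 \<and> (\<exists>C N. \<forall>m\<ge>N. \<forall>t::real. -1 + 1 / sqrt (real m) \<le> t \<and> t \<le> 1 - 1 / sqrt (real m) \<longrightarrow>
        cmod (f_tilde m (\<i> * of_real t)) \<le> C * (exp (- sqrt (real m) / 2) / sqrt (real m)))
 \<and> (\<exists>C N. \<forall>m\<ge>N. \<forall>t::real. 1 - 1 / sqrt (real m) \<le> t \<and> t \<le> 1 - 1 / real m \<longrightarrow>
        cmod (f_tilde m (\<i> * of_real t) - of_real (E1 (real m * (1 - t))) / (2 * \<i>))
          \<le> C * (ln (real m) / real m))
 \<and> (\<exists>C N. \<forall>m\<ge>N. \<forall>t::real. 1 - 1 / sqrt (real m) \<le> t \<and> t \<le> 1 - 1 / real m \<longrightarrow>
        cmod (f_tilde m (\<i> * of_real t)) \<le> C \<and> cmod (f_tilde m (- \<i> * of_real t)) \<le> C)"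
proof (intro conjI)
  show "\<exists>C N. \<forall>m\<ge>N. \<forall>z. cmod z \<le> 1/2 \<longrightarrow> cmod (f_tilde m z) \<le> C * 2 powr (- real m)"
    by (intro exI[of _ 1] allI impI part_i) auto
  show "\<exists>C N. \<forall>m\<ge>N. \<forall>t::real. -1 + 1 / sqrt (real m) \<le> t \<and> t \<le> 1 - 1 / sqrt (real m) \<longrightarrow>
        cmod (f_tilde m (\<i> * of_real t)) \<le> C * (exp (- sqrt (real m) / 2) / sqrt (real m))"
    by (intro exI[of _ 16] exI[of _ 4] allI impI part_ii) auto
  show "\<exists>C N. \<forall>m\<ge>N. \<forall>t::real. 1 - 1 / sqrt (real m) \<le> t \<and> t \<le> 1 - 1 / real m \<longrightarrow>
        cmod (f_tilde m (\<i> * of_real t) - of_real (E1 (real m * (1 - t))) / (2 * \<i>))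
          \<le> C * (ln (real m) / real m)"
    by (intro exI[of _ 8] exI[of _ 3] allI impI part_iii(1)) auto
  show "\<exists>C N. \<forall>m\<ge>N. \<forall>t::real. 1 - 1 / sqrt (real m) \<le> t \<and> t \<le> 1 - 1 / real m \<longrightarrow>
        cmod (f_tilde m (\<i> * of_real t)) \<le> C \<and> cmod (f_tilde m (- \<i> * of_real t)) \<le> C"
  proof -
    have "\<forall>m\<ge>3. \<forall>t::real. 1 - 1 / sqrt (real m) \<le> t \<and> t \<le> 1 - 1 / real m \<longrightarrow>
        cmod (f_tilde m (\<i> * of_real t)) \<le> 9 \<and> cmod (f_tilde m (- \<i> * of_real t)) \<le> 9"
    proof (intro allI impI)
      fix m :: nat and t :: real
      assume m: "3 \<le> m" and t: "1 - 1 / sqrt (real m) \<le> t \<and> t \<le> 1 - 1 / real m"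
      have A: "cmod (f_tilde m (\<i> * of_real t)) \<le> 9" using m t by (intro part_iii(2)) auto
      have "f_tilde m (- \<i> * of_real t) = - f_tilde m (\<i> * of_real t)"
        using f_tilde_neg[of m "\<i> * of_real t"] by simp
      then show "cmod (f_tilde m (\<i> * of_real t)) \<le> 9 \<and> cmod (f_tilde m (- \<i> * of_real t)) \<le> 9"
        using A by simp
    qed
    then show ?thesis by blast
  qed
qed

end
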